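(* Let $X,Y$ be finite sets and $F_X,F_Y$ filtrations over $X$ and $Y$. If $F_X$ and $F_Y$ are weakly equivalent, then $\mathbf{mgm}(F_X)=\mathbf{mgm}(F_Y)$ as multisets of intervals.
   Context: $\mathbf{pow}(X)$ is the set of nonempty subsets of $X$; a filtration over $X$ is an order-preserving map $F_X:(\mathbf{pow}(X),\subset)\to(\mathbb{R},\leq)$. For a surjection $\varphi_X:Z\twoheadrightarrow X$, the pullback filtration is $\varphi_X^*F_X:\mathbf{pow}(Z)\to\mathbb{R}$, $\kappa\mapsto F_X(\varphi_X(\kappa))$. $F_X,F_Y$ are weakly equivalent if there exist a finite set $Z$ and surjections $\varphi_X:Z\twoheadrightarrow X$, $\varphi_Y:Z\twoheadrightarrow Y$ with $\varphi_X^*F_X=\varphi_Y^*F_Y$. The mergegram of $F_X$: let $C_X(t)$ be the set of inclusion-maximal elements of $\{\sigma\in\mathbf{pow}(X)\mid F_X(\sigma)\leq t\}$; for nonempty $\sigma$, $I_\sigma:=\{t\in\mathbb{R}\mid\sigma\in C_X(t)\}$ (equivalently $I_\sigma=[F_X(\sigma),\min_{\sigma\subsetneq\tau\subset X}F_X(\tau))$ with $\min\emptyset=+\infty$); $\mathbf{mgm}(F_X)$ is the multiset of the nonempty $I_\sigma$, one entry per nonempty $\sigma\subset X$ with $I_\sigma\neq\emptyset$. *)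

theory Defs
  imports Complex_Main "HOL-Library.Multiset"
begin

definition pow :: "'a set \<Rightarrow> 'a set set" where
  "pow X = {\<sigma>. \<sigma> \<subseteq> X \<and> \<sigma> \<noteq> {}}"

definition filtration :: "'a set \<Rightarrow> ('a set \<Rightarrow> real) \<Rightarrow> bool" where
  "filtration X F \<longleftrightarrow> (\<forall>\<sigma>\<in>pow X. \<forall>\<tau>\<in>pow X. \<sigma> \<subseteq> \<tau> \<longrightarrow> F \<sigma> \<le> F \<tau>)"

definition pullback :: "('c \<Rightarrow> 'a) \<Rightarrow> ('a set \<Rightarrow> real) \<Rightarrow> 'c set \<Rightarrow> real" where
  "pullback \<phi> F = (\<lambda>\<kappa>. F (\<phi> ` \<kappa>))"

text \<open>Surjection Z onto X, given by a function whose image of Z is X.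
  The witnessing finite set Z is taken inside nat (every finite set embeds there).\<close>
definition weakly_equivalent ::
  "'a set \<Rightarrow> ('a set \<Rightarrow> real) \<Rightarrow> 'b set \<Rightarrow> ('b set \<Rightarrow> real) \<Rightarrow> bool" where
  "weakly_equivalent X FX Y FY \<longleftrightarrow>
     (\<exists>(Z::nat set) (\<phi>X::nat \<Rightarrow> 'a) (\<phi>Y::nat \<Rightarrow> 'b). finite Z \<and> \<phi>X ` Z = X \<and> \<phi>Y ` Z = Y \<and>
        (\<forall>\<kappa>\<in>pow Z. pullback \<phi>X FX \<kappa> = pullback \<phi>Y FY \<kappa>))"

definition Cset :: "'a set \<Rightarrow> ('a set \<Rightarrow> real) \<Rightarrow> real \<Rightarrow> 'a set set" where
  "Cset X F t = {\<sigma> \<in> pow X. F \<sigma> \<le> t \<and>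
       (\<forall>\<tau>\<in>pow X. F \<tau> \<le> t \<longrightarrow> \<sigma> \<subseteq> \<tau> \<longrightarrow> \<tau> = \<sigma>)}"

definition Ival :: "'a set \<Rightarrow> ('a set \<Rightarrow> real) \<Rightarrow> 'a set \<Rightarrow> real set" where
  "Ival X F \<sigma> = {t. \<sigma> \<in> Cset X F t}"

definition mgm :: "'a set \<Rightarrow> ('a set \<Rightarrow> real) \<Rightarrow> real set multiset" where
  "mgm X F = image_mset (Ival X F) (mset_set {\<sigma> \<in> pow X. Ival X F \<sigma> \<noteq> {}})"

end

theory Submission
  imports Defs
begin

lemma mgm_cong:
  assumes "\<forall>\<kappa>\<in>pow Z. F \<kappa> = G \<kappa>"
  shows "mgm Z F = mgm Z G"
proof -
  have "Cset Z F t = Cset Z G t" for t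
    using assms unfolding Cset_def by auto
  hence I: "Ival Z F = Ival Z G" unfolding Ival_def by (auto intro!: ext)
  show ?thesis unfolding mgm_def I ..
qed

lemma Cset_pull:
  assumes surj: "\<phi> ` Z = X" and sp: "\<sigma> \<in> pow Z"
  shows "\<sigma> \<in> Cset Z (pullback \<phi> F) t \<longleftrightarrow>
         (\<sigma> = {z\<in>Z. \<phi> z \<in> \<phi> ` \<sigma>} \<and> \<phi> ` \<sigma> \<in> Cset X F t)"
proof
  assume c: "\<sigma> \<in> Cset Z (pullback \<phi> F) t"
  let ?p = "{z\<in>Z. \<phi> z \<in> \<phi> ` \<sigma>}"
  have s1: "\<sigma> \<subseteq> ?p" using sp unfolding pow_def by auto
  have p1: "?p \<in> pow Z" using s1 sp unfolding pow_def by auto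
  have im: "\<phi> ` ?p = \<phi> ` \<sigma>" using s1 by auto
  have e: "?p = \<sigma>" using c p1 s1 im unfolding Cset_def pullback_def by auto
  have ps: "\<phi> ` \<sigma> \<in> pow X" using sp surj unfolding pow_def by auto
  have Fl: "F (\<phi> ` \<sigma>) \<le> t" using c unfolding Cset_def pullback_def by auto
  have mx: "\<tau> = \<phi> ` \<sigma>" if "\<tau> \<in> pow X" "F \<tau> \<le> t" "\<phi> ` \<sigma> \<subseteq> \<tau>" for \<tau>
  proof -
    let ?q = "{z\<in>Z. \<phi> z \<in> \<tau>}"
    have iq: "\<phi> ` ?q = \<tau>" using that(1) surj unfolding pow_def by auto
    have q1: "?q \<in> pow Z" using iq that(1) unfolding pow_def by auto
    have sq: "\<sigma> \<subseteq> ?q" using that(3) sp unfolding pow_def by auto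
    have "?q = \<sigma>" using c q1 sq iq that(2) unfolding Cset_def pullback_def by auto
    thus ?thesis using iq by simp
  qed
  show "\<sigma> = ?p \<and> \<phi> ` \<sigma> \<in> Cset X F t"
    using e ps Fl mx unfolding Cset_def by auto
next
  assume h: "\<sigma> = {z\<in>Z. \<phi> z \<in> \<phi> ` \<sigma>} \<and> \<phi> ` \<sigma> \<in> Cset X F t"
  have Fl: "F (\<phi> ` \<sigma>) \<le> t" using h unfolding Cset_def by auto
  have mx: "\<tau> = \<sigma>" if "\<tau> \<in> pow Z" "F (\<phi> ` \<tau>) \<le> t" "\<sigma> \<subseteq> \<tau>" for \<tau>
  proof -
    have "\<phi> ` \<tau> \<in> pow X" using that(1) surj unfolding pow_def by auto
    moreover have "\<phi> ` \<sigma> \<subseteq> \<phi> ` \<tau>" using that(3) by auto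
    ultimately have "\<phi> ` \<tau> = \<phi> ` \<sigma>" using h that(2) unfolding Cset_def by auto
    hence "\<tau> \<subseteq> {z\<in>Z. \<phi> z \<in> \<phi> ` \<sigma>}" using that(1) unfolding pow_def by auto
    thus ?thesis using h that(3) by auto
  qed
  show "\<sigma> \<in> Cset Z (pullback \<phi> F) t"
    using sp Fl mx unfolding Cset_def pullback_def by auto
qed

lemma mgm_pull:
  assumes surj: "\<phi> ` Z = X"
  shows "mgm Z (pullback \<phi> F) = mgm X F"
proof -
  define pre where "pre \<rho> = {z\<in>Z. \<phi> z \<in> \<rho>}" for \<rho>
  have imp: "\<phi> ` pre \<rho> = \<rho>" if "\<rho> \<subseteq> X" for \<rho>
    using that surj unfolding pre_def by auto
  have inj: "inj_on pre (pow X)"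
  proof
    fix a b assume "a \<in> pow X" "b \<in> pow X" "pre a = pre b"
    hence "a \<subseteq> X" "b \<subseteq> X" "pre a = pre b" unfolding pow_def by auto
    have "\<phi> ` pre a = a" using imp \<open>a \<subseteq> X\<close> by blast
    moreover have "\<phi> ` pre b = b" using imp \<open>b \<subseteq> X\<close> by blast
    ultimately show "a = b" using \<open>pre a = pre b\<close> by metis
  qed
  have Iv1: "Ival Z (pullback \<phi> F) \<sigma> = (if \<sigma> = pre (\<phi> ` \<sigma>) then Ival X F (\<phi> ` \<sigma>) else {})"
    if "\<sigma> \<in> pow Z" for \<sigma>
  proof (cases "\<sigma> = pre (\<phi> ` \<sigma>)")
    case True
    have "Ival Z (pullback \<phi> F) \<sigma> = Ival X F (\<phi> ` \<sigma>)"
      unfolding Ival_def using Cset_pull[OF surj that] True unfolding pre_def by blast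
    thus ?thesis unfolding if_P[OF True] .
  next
    case False
    have "Ival Z (pullback \<phi> F) \<sigma> = {}"
      unfolding Ival_def using Cset_pull[OF surj that] False unfolding pre_def by blast
    thus ?thesis unfolding if_not_P[OF False] .
  qed
  have prepow: "pre \<rho> \<in> pow Z" if "\<rho> \<in> pow X" for \<rho>
  proof -
    have "\<rho> \<subseteq> X" "\<rho> \<noteq> {}" using that unfolding pow_def by auto
    hence "\<phi> ` pre \<rho> \<noteq> {}" using imp by simp
    thus ?thesis unfolding pow_def pre_def by blast
  qed
  have Iv2: "Ival Z (pullback \<phi> F) (pre \<rho>) = Ival X F \<rho>" if "\<rho> \<in> pow X" for \<rho>
  proof -
    have "\<rho> \<subseteq> X" using that unfolding pow_def by auto
    hence "pre (\<phi> ` pre \<rho>) = pre \<rho>" using imp by simp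
    hence "Ival Z (pullback \<phi> F) (pre \<rho>) = Ival X F (\<phi> ` pre \<rho>)"
      using Iv1[OF prepow[OF that]] by (simp only: if_True simp_thms)
    thus ?thesis using imp \<open>\<rho> \<subseteq> X\<close> by simp
  qed
  have S: "{\<sigma> \<in> pow Z. Ival Z (pullback \<phi> F) \<sigma> \<noteq> {}} = pre ` {\<rho> \<in> pow X. Ival X F \<rho> \<noteq> {}}"
  proof
    show "{\<sigma> \<in> pow Z. Ival Z (pullback \<phi> F) \<sigma> \<noteq> {}} \<subseteq> pre ` {\<rho> \<in> pow X. Ival X F \<rho> \<noteq> {}}"
    proof
      fix \<sigma> assume a: "\<sigma> \<in> {\<sigma> \<in> pow Z. Ival Z (pullback \<phi> F) \<sigma> \<noteq> {}}"
      hence sp: "\<sigma> \<in> pow Z" by auto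
      have e: "\<sigma> = pre (\<phi> ` \<sigma>)" and ne: "Ival X F (\<phi> ` \<sigma>) \<noteq> {}"
      proof -
        have ne0: "Ival Z (pullback \<phi> F) \<sigma> \<noteq> {}" using a by blast
        show "\<sigma> = pre (\<phi> ` \<sigma>)"
        proof (rule ccontr)
          assume "\<sigma> \<noteq> pre (\<phi> ` \<sigma>)"
          hence "Ival Z (pullback \<phi> F) \<sigma> = {}" using Iv1[OF sp] by (simp only: if_False simp_thms)
          thus False using ne0 by blast
        qed
        hence "Ival Z (pullback \<phi> F) \<sigma> = Ival X F (\<phi> ` \<sigma>)" using Iv1[OF sp] by (simp only: if_True simp_thms)
        thus "Ival X F (\<phi> ` \<sigma>) \<noteq> {}" using ne0 by simp
      qed
      have "\<phi> ` \<sigma> \<in> pow X" using sp surj unfolding pow_def by auto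
      thus "\<sigma> \<in> pre ` {\<rho> \<in> pow X. Ival X F \<rho> \<noteq> {}}" using e ne by blast
    qed
    show "pre ` {\<rho> \<in> pow X. Ival X F \<rho> \<noteq> {}} \<subseteq> {\<sigma> \<in> pow Z. Ival Z (pullback \<phi> F) \<sigma> \<noteq> {}}"
      using prepow Iv2 by auto
  qed
  have inj2: "inj_on pre {\<rho> \<in> pow X. Ival X F \<rho> \<noteq> {}}"
    using inj by (rule inj_on_subset) auto
  have "mgm Z (pullback \<phi> F) = image_mset (Ival Z (pullback \<phi> F))
          (image_mset pre (mset_set {\<rho> \<in> pow X. Ival X F \<rho> \<noteq> {}}))"
    unfolding mgm_def S image_mset_mset_set[OF inj2] ..
  also have "\<dots> = image_mset (Ival Z (pullback \<phi> F) \<circ> pre) (mset_set {\<rho> \<in> pow X. Ival X F \<rho> \<noteq> {}})"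
    by (simp add: multiset.map_comp)
  also have "\<dots> = image_mset (Ival X F) (mset_set {\<rho> \<in> pow X. Ival X F \<rho> \<noteq> {}})"
  proof (rule image_mset_cong)
    fix \<rho> assume "\<rho> \<in># mset_set {\<rho> \<in> pow X. Ival X F \<rho> \<noteq> {}}"
    hence "\<rho> \<in> pow X"
      by (metis (no_types, lifting) elem_mset_set empty_iff mem_Collect_eq mset_set.infinite set_mset_empty)
    thus "(Ival Z (pullback \<phi> F) \<circ> pre) \<rho> = Ival X F \<rho>" using Iv2 by simp
  qed
  finally show ?thesis unfolding mgm_def .
qed

theorem mainTheorem14:
  fixes X :: "'a set" and Y :: "'b set"
    and FX :: "'a set \<Rightarrow> real" and FY :: "'b set \<Rightarrow> real"
  assumes "finite X" and "finite Y"
    and "filtration X FX" and "filtration Y FY"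
    and "weakly_equivalent X FX Y FY"
  shows "mgm X FX = mgm Y FY"
proof -
  obtain Z :: "nat set" and \<phi>X \<phi>Y where "\<phi>X ` Z = X" "\<phi>Y ` Z = Y"
    "\<forall>\<kappa>\<in>pow Z. pullback \<phi>X FX \<kappa> = pullback \<phi>Y FY \<kappa>"
    using assms(5) unfolding weakly_equivalent_def by blast
  thus ?thesis using mgm_pull[of \<phi>X Z X FX] mgm_pull[of \<phi>Y Z Y FY] mgm_cong[of Z "pullback \<phi>X FX" "pullback \<phi>Y FY"] by simp
qed

end
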